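(* Let $X$ and $Y$ be compact Hausdorff spaces and let $A(X)\subseteq C(X)$ and $A(Y)\subseteq C(Y)$ be (real) vector subspaces that contain the constant functions and precisely separate points from closed sets. If $T: A(X)\to A(Y)$ is a linear order isomorphism, then there is a homeomorphism $h:X\to Y$ such that $Tf = T1_X\cdot (f\circ h^{-1})$ for all $f\in A(X)$.
   Context: All function spaces are real. $C(X)$ denotes the real-valued continuous functions on $X$, and $1_X$ the constant function $1$ on $X$. A subspace $A(X)\subseteq C(X)$ separates points from closed sets if for every $x\in X$ and every closed $F\subseteq X$ with $x\notin F$ there is $f\in A(X)$ with $f(x)=1$ and $f=0$ on $F$; it precisely separates points from closed sets if moreover such $f$ can always be chosen with values in $[0,1]$. A linear bijection $T:A(X)\to A(Y)$ is an order isomorphism if for every $f\in A(X)$, $f\ge 0$ (pointwise) if and only if $Tf\ge 0$. *)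

theory Defs
  imports "HOL-Analysis.Analysis"
begin

text \<open>The compact Hausdorff space X is modelled as a type 'a of class t2_space
  whose universe is compact; C(X) is the set of real functions continuous on UNIV.\<close>

definition fun_subspace_of_C :: "('a::topological_space \<Rightarrow> real) set \<Rightarrow> bool" where
  "fun_subspace_of_C A \<longleftrightarrow>
     (\<forall>f\<in>A. continuous_on UNIV f) \<and>
     (\<lambda>_. 0) \<in> A \<and>
     (\<forall>f\<in>A. \<forall>g\<in>A. (\<lambda>x. f x + g x) \<in> A) \<and>
     (\<forall>c. \<forall>f\<in>A. (\<lambda>x. c * f x) \<in> A)"

definition contains_constants :: "('a \<Rightarrow> real) set \<Rightarrow> bool" where
  "contains_constants A \<longleftrightarrow> (\<forall>c::real. (\<lambda>_. c) \<in> A)"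

definition precisely_separates_points_closed :: "('a::topological_space \<Rightarrow> real) set \<Rightarrow> bool" where
  "precisely_separates_points_closed A \<longleftrightarrow>
     (\<forall>x F. closed F \<and> x \<notin> F \<longrightarrow>
        (\<exists>f\<in>A. f x = 1 \<and> (\<forall>y\<in>F. f y = 0) \<and> (\<forall>y. 0 \<le> f y \<and> f y \<le> 1)))"

definition linear_on :: "('a \<Rightarrow> real) set \<Rightarrow> (('a \<Rightarrow> real) \<Rightarrow> ('b \<Rightarrow> real)) \<Rightarrow> bool" where
  "linear_on A T \<longleftrightarrow>
     (\<forall>f\<in>A. \<forall>g\<in>A. T (\<lambda>x. f x + g x) = (\<lambda>y. T f y + T g y)) \<and>
     (\<forall>c. \<forall>f\<in>A. T (\<lambda>x. c * f x) = (\<lambda>y. c * T f y))"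

definition order_isomorphism :: "('a \<Rightarrow> real) set \<Rightarrow> ('b \<Rightarrow> real) set \<Rightarrow> (('a \<Rightarrow> real) \<Rightarrow> ('b \<Rightarrow> real)) \<Rightarrow> bool" where
  "order_isomorphism A B T \<longleftrightarrow>
     linear_on A T \<and> bij_betw T A B \<and>
     (\<forall>f\<in>A. (\<forall>x. 0 \<le> f x) \<longleftrightarrow> (\<forall>y. 0 \<le> T f y))"

end

theory Submission
  imports Defs
begin

lemma small_zero: fixes a b :: real assumes "b \<ge> 0" "\<And>\<epsilon>. \<epsilon> > 0 \<Longrightarrow> \<bar>a\<bar> \<le> \<epsilon> * b" shows "a = 0"
proof (rule ccontr)
  assume "a \<noteq> 0"
  define \<epsilon> where "\<epsilon> = \<bar>a\<bar> / (2 * (b + 1))"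
  have "\<epsilon> > 0" using \<open>a \<noteq> 0\<close> assms(1) by (simp add: \<epsilon>_def)
  hence "\<bar>a\<bar> \<le> \<epsilon> * b" by (rule assms(2))
  moreover have "\<epsilon> * b < \<bar>a\<bar>"
  proof -
    have q: "b / (2 * (b + 1)) < 1" using assms(1) by (simp add: field_simps)
    have "\<epsilon> * b = \<bar>a\<bar> * (b / (2 * (b + 1)))" by (simp add: \<epsilon>_def)
    also have "\<dots> < \<bar>a\<bar> * 1" using q \<open>a \<noteq> 0\<close> by (intro mult_strict_left_mono) auto
    finally show ?thesis by simp
  qed
  ultimately show False by simp
qed

locale OI =
  fixes A :: "('a::t2_space \<Rightarrow> real) set"
    and B :: "('b::t2_space \<Rightarrow> real) set"
    and T :: "('a \<Rightarrow> real) \<Rightarrow> ('b \<Rightarrow> real)"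
  assumes cX: "compact (UNIV :: 'a set)" and cY: "compact (UNIV :: 'b set)"
    and sA: "fun_subspace_of_C A" and cA: "contains_constants A" and pA: "precisely_separates_points_closed A"
    and sB: "fun_subspace_of_C B" and cB: "contains_constants B" and pB: "precisely_separates_points_closed B"
    and oi: "order_isomorphism A B T"
begin

lemma contA: "f \<in> A \<Longrightarrow> continuous_on UNIV f" using sA by (auto simp: fun_subspace_of_C_def)
lemma contB: "g \<in> B \<Longrightarrow> continuous_on UNIV g" using sB by (auto simp: fun_subspace_of_C_def)
lemma constA: "(\<lambda>_. c) \<in> A" using cA by (auto simp: contains_constants_def)
lemma constB: "(\<lambda>_. c) \<in> B" using cB by (auto simp: contains_constants_def)
lemma linA: "f \<in> A \<Longrightarrow> g \<in> A \<Longrightarrow> (\<lambda>x. a * f x + b * g x) \<in> A"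
  using sA by (auto simp: fun_subspace_of_C_def)
lemma TB: "f \<in> A \<Longrightarrow> T f \<in> B" using oi by (auto simp: order_isomorphism_def bij_betw_def)
lemma Tsurj: "g \<in> B \<Longrightarrow> \<exists>f\<in>A. T f = g" using oi by (auto simp: order_isomorphism_def bij_betw_def)
lemma Tinj: "f \<in> A \<Longrightarrow> g \<in> A \<Longrightarrow> T f = T g \<Longrightarrow> f = g"
  using oi by (auto simp: order_isomorphism_def bij_betw_def inj_on_def)
lemma pos: "f \<in> A \<Longrightarrow> (\<forall>x. 0 \<le> f x) \<longleftrightarrow> (\<forall>y. 0 \<le> T f y)"
  using oi by (auto simp: order_isomorphism_def)
lemma Tlin: assumes "f \<in> A" "g \<in> A" shows "T (\<lambda>x. a * f x + b * g x) = (\<lambda>y. a * T f y + b * T g y)"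
proof -
  have l: "linear_on A T" using oi by (simp add: order_isomorphism_def)
  have "(\<lambda>x. a * f x) \<in> A" "(\<lambda>x. b * g x) \<in> A" using sA assms by (auto simp: fun_subspace_of_C_def)
  then have "T (\<lambda>x. a * f x + b * g x) = (\<lambda>y. T (\<lambda>x. a * f x) y + T (\<lambda>x. b * g x) y)"
    using l by (auto simp: linear_on_def)
  also have "\<dots> = (\<lambda>y. a * T f y + b * T g y)" using l assms by (auto simp: linear_on_def)
  finally show ?thesis .
qed
lemma lin3A: "f \<in> A \<Longrightarrow> g \<in> A \<Longrightarrow> h \<in> A \<Longrightarrow> (\<lambda>x. a * f x + b * g x + c * h x) \<in> A"
  using linA[of "\<lambda>x. a * f x + b * g x" h 1 c] linA[of f g a b] by simp
lemma Tlin3: assumes "f \<in> A" "g \<in> A" "h \<in> A"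
  shows "T (\<lambda>x. a * f x + b * g x + c * h x) = (\<lambda>y. a * T f y + b * T g y + c * T h y)"
  using Tlin[of "\<lambda>x. a * f x + b * g x" h 1 c] Tlin[of f g a b] linA[of f g a b] assms by simp

lemma T0: "T (\<lambda>_. 0) = (\<lambda>_. 0)"
  using Tlin[of "\<lambda>_. 0" "\<lambda>_. 0" 0 0] constA by simp

definition e where "e = T (\<lambda>_. 1)"

lemma Tconst: "T (\<lambda>_. c) = (\<lambda>y. c * e y)"
  using Tlin[of "\<lambda>_. 1" "\<lambda>_. 1" c 0] constA by (simp add: e_def)

lemma boundB: assumes "g \<in> B" shows "\<exists>M. \<forall>z. \<bar>g z\<bar> \<le> M"
proof -
  have "compact (g ` UNIV)" using compact_continuous_image[OF contB[OF assms] cY] .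
  then have "bounded (g ` UNIV)" by (rule compact_imp_bounded)
  then show ?thesis by (auto simp: bounded_iff)
qed

lemma boundA: assumes "f \<in> A" shows "\<exists>M. \<forall>z. \<bar>f z\<bar> \<le> M"
proof -
  have "compact (f ` UNIV)" using compact_continuous_image[OF contA[OF assms] cX] .
  then have "bounded (f ` UNIV)" by (rule compact_imp_bounded)
  then show ?thesis by (auto simp: bounded_iff)
qed

lemma e_pos: "0 < e y"
proof -
  have "0 \<le> e y" using pos[of "\<lambda>_. 1"] constA by (simp add: e_def)
  moreover have "e y \<noteq> 0"
  proof
    assume e0: "e y = 0"
    obtain f where f: "f \<in> A" "T f = (\<lambda>_. 1)" using Tsurj constB by blast
    obtain M where M: "\<forall>x. \<bar>f x\<bar> \<le> M" using boundA[OF f(1)] by blast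
    have "\<forall>x. 0 \<le> M * 1 + (-1) * f x" using M by (smt (verit))
    then have "\<forall>z. 0 \<le> T (\<lambda>x. M * 1 + (-1) * f x) z"
      using pos[of "\<lambda>x. M * 1 + (-1) * f x"] linA[of "\<lambda>_. 1" f M "-1"] constA f by auto
    then have "0 \<le> M * e y - T f y"
      using Tlin[of "\<lambda>_. 1" f M "-1"] constA f(1) by (simp add: e_def)
    then show False using e0 f(2) by simp
  qed
  ultimately show ?thesis by simp
qed

lemma kernel_point: "\<exists>x. \<forall>f\<in>A. (\<forall>z. 0 \<le> f z) \<and> T f y = 0 \<longrightarrow> f x = 0"
proof -
  define N where "N = {f\<in>A. (\<forall>z. 0 \<le> f z) \<and> T f y = 0}"
  have fin: "\<exists>f\<in>N. f -` {0} \<subseteq> (\<Inter>h\<in>N'. h -` {0})" if "finite N'" "N' \<subseteq> N" for N'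
    using that
  proof (induction N' rule: finite_induct)
    case empty
    have "(\<lambda>_. 0) \<in> N" using constA T0 by (simp add: N_def)
    then show ?case by auto
  next
    case (insert h N')
    then obtain f where f: "f \<in> N" "f -` {0} \<subseteq> (\<Inter>h\<in>N'. h -` {0})" by auto
    have h: "h \<in> N" using insert by auto
    have "(\<lambda>x. 1 * f x + 1 * h x) \<in> N"
      using f(1) h linA[of f h 1 1] Tlin[of f h 1 1] by (auto simp: N_def)
    moreover have "(\<lambda>x. 1 * f x + 1 * h x) -` {0} \<subseteq> (\<Inter>h\<in>insert h N'. h -` {0})"
    proof
      fix x assume "x \<in> (\<lambda>x. 1 * f x + 1 * h x) -` {0}"
      then have "f x + h x = 0" by simp
      moreover have "0 \<le> f x" "0 \<le> h x" using f(1) h by (auto simp: N_def)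
      ultimately have "f x = 0" "h x = 0" by auto
      then show "x \<in> (\<Inter>h\<in>insert h N'. h -` {0})" using f(2) by auto
    qed
    ultimately show ?case by blast
  qed
  have ne: "f -` {0} \<noteq> {}" if "f \<in> N" for f
  proof
    assume z: "f -` {0} = {}"
    have fA: "f \<in> A" and fp: "\<forall>z. 0 \<le> f z" and fT: "T f y = 0" using that by (auto simp: N_def)
    obtain x0 where x0: "\<forall>z. f x0 \<le> f z" using continuous_attains_inf[OF cX _ contA[OF fA]] by auto
    have c: "f x0 > 0" using z fp by (metis le_less vimage_singleton_eq empty_iff)
    have "\<forall>x. 0 \<le> 1 * f x + (- f x0) * 1" using x0 by simp
    then have "\<forall>z. 0 \<le> T (\<lambda>x. 1 * f x + (- f x0) * 1) z"
      using pos[of "\<lambda>x. 1 * f x + (- f x0) * 1"] linA[of f "\<lambda>_. 1" 1 "- f x0"] constA fA by auto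
    then have "0 \<le> T f y - f x0 * e y"
      using Tlin[of f "\<lambda>_. 1" 1 "- f x0"] constA fA by (simp add: e_def)
    then show False using fT c e_pos[of y] by (smt (verit) mult_pos_pos)
  qed
  have "UNIV \<inter> (\<Inter>f\<in>N. f -` {0}) \<noteq> {}"
  proof (rule compact_imp_fip_image[OF cX])
    fix f assume "f \<in> N"
    then have "continuous_on UNIV f" using contA by (auto simp: N_def)
    then show "closed (f -` {0})" by (simp add: continuous_on_closed_vimage)
  next
    fix N' assume "finite N'" "N' \<subseteq> N"
    then obtain f where "f \<in> N" "f -` {0} \<subseteq> (\<Inter>h\<in>N'. h -` {0})" using fin by blast
    then show "UNIV \<inter> (\<Inter>h\<in>N'. h -` {0}) \<noteq> {}" using ne by blast
  qed
  then obtain x where "x \<in> (\<Inter>f\<in>N. f -` {0})" by blast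
  then show ?thesis by (auto simp: N_def)
qed

lemma eval:
  assumes hx: "\<forall>f\<in>A. (\<forall>z. 0 \<le> f z) \<and> T f y = 0 \<longrightarrow> f x = 0"
  shows "\<forall>f\<in>A. T f y = e y * f x"
proof -
  obtain d where d: "d \<in> A" "T d = (\<lambda>_. 1)" using Tsurj constB by blast
  have dx: "0 \<le> d x" using pos[OF d(1)] d(2) by simp
  have key: "f x = T f y * d x" if fA: "f \<in> A" for f
  proof -
    define g where "g = T f"
    have gB: "g \<in> B" using TB fA by (simp add: g_def)
    obtain M where M: "\<forall>z. \<bar>g z\<bar> \<le> M" using boundB[OF gB] by blast
    define D where "D = 2 * M"
    have D0: "0 \<le> D" using M[rule_format, of y] by (simp add: D_def)
    have "\<bar>f x - g y * d x\<bar> = 0"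
    proof (rule small_zero[OF dx])
      fix \<epsilon> :: real assume \<epsilon>: "\<epsilon> > 0"
      define F where "F = {z. \<epsilon> \<le> \<bar>g z - g y\<bar>}"
      have "closed F" unfolding F_def
        by (intro closed_Collect_le continuous_intros contB gB)
      moreover have "y \<notin> F" using \<epsilon> by (simp add: F_def)
      ultimately obtain k where k: "k \<in> B" "k y = 1" "\<forall>z\<in>F. k z = 0" "\<forall>z. 0 \<le> k z \<and> k z \<le> 1"
        using pB unfolding precisely_separates_points_closed_def by blast
      obtain \<kappa> where \<kappa>: "\<kappa> \<in> A" "T \<kappa> = k" using Tsurj k(1) by blast
      have bnd: "\<bar>g z - g y\<bar> \<le> \<epsilon> + D * (1 - k z)" for z
      proof (cases "z \<in> F")
        case True
        then show ?thesis using k(3) M[rule_format, of z] M[rule_format, of y] \<epsilon> by (simp add: D_def)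
      next
        case False
        then have "\<bar>g z - g y\<bar> < \<epsilon>" by (simp add: F_def)
        moreover have "0 \<le> D * (1 - k z)" using D0 k(4) by simp
        ultimately show ?thesis by simp
      qed
      have "\<forall>z. 0 \<le> T (\<lambda>t. 1 * d t + (-1) * \<kappa> t) z"
        using Tlin[OF d(1) \<kappa>(1), of 1 "-1"] d(2) \<kappa>(2) k(4) by simp
      moreover have "T (\<lambda>t. 1 * d t + (-1) * \<kappa> t) y = 0"
        using Tlin[OF d(1) \<kappa>(1), of 1 "-1"] d(2) \<kappa>(2) k(2) by simp
      ultimately have "d x - \<kappa> x = 0"
        using hx linA[OF d(1) \<kappa>(1), of 1 "-1"] pos[OF linA[OF d(1) \<kappa>(1), of 1 "-1"]] by auto
      then have kx: "\<kappa> x = d x" by simp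
      have f1: "0 \<le> (\<epsilon> + D + g y) * d x + (- D) * \<kappa> x + (-1) * f x"
      proof -
        have eq: "T (\<lambda>t. (\<epsilon> + D + g y) * d t + (- D) * \<kappa> t + (-1) * f t) = (\<lambda>z. (\<epsilon> + D + g y) * 1 + (- D) * k z + (-1) * g z)"
          using Tlin3[OF d(1) \<kappa>(1) fA, of "\<epsilon> + D + g y" "- D" "-1"] d(2) \<kappa>(2) by (simp add: g_def)
        have "\<forall>z. 0 \<le> T (\<lambda>t. (\<epsilon> + D + g y) * d t + (- D) * \<kappa> t + (-1) * f t) z"
          unfolding eq proof
          fix z show "0 \<le> (\<epsilon> + D + g y) * 1 + (- D) * k z + (-1) * g z" using bnd[of z] by (simp add: algebra_simps abs_le_iff)
        qed
        then show ?thesis using pos[OF lin3A[OF d(1) \<kappa>(1) fA]] by blast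
      qed
      have f2: "0 \<le> (\<epsilon> + D - g y) * d x + (- D) * \<kappa> x + 1 * f x"
      proof -
        have eq: "T (\<lambda>t. (\<epsilon> + D - g y) * d t + (- D) * \<kappa> t + 1 * f t) = (\<lambda>z. (\<epsilon> + D - g y) * 1 + (- D) * k z + 1 * g z)"
          using Tlin3[OF d(1) \<kappa>(1) fA, of "\<epsilon> + D - g y" "- D" "1"] d(2) \<kappa>(2) by (simp add: g_def)
        have "\<forall>z. 0 \<le> T (\<lambda>t. (\<epsilon> + D - g y) * d t + (- D) * \<kappa> t + 1 * f t) z"
          unfolding eq proof
          fix z show "0 \<le> (\<epsilon> + D - g y) * 1 + (- D) * k z + 1 * g z" using bnd[of z] by (simp add: algebra_simps abs_le_iff)
        qed
        then show ?thesis using pos[OF lin3A[OF d(1) \<kappa>(1) fA]] by blast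
      qed
      show "\<bar>\<bar>f x - g y * d x\<bar>\<bar> \<le> \<epsilon> * d x" using f1 f2 kx by (simp add: algebra_simps abs_le_iff)
    qed
    then show ?thesis by (simp add: g_def)
  qed
  have one: "e y * d x = 1" using key[of "\<lambda>_. 1"] constA by (simp add: e_def)
  show ?thesis
  proof
    fix f assume "f \<in> A"
    then have "f x = T f y * d x" by (rule key)
    then have "e y * f x = T f y * (e y * d x)" by simp
    then show "T f y = e y * f x" using one by simp
  qed
qed

definition phi where "phi y = (SOME x. \<forall>f\<in>A. T f y = e y * f x)"

lemma phi: "f \<in> A \<Longrightarrow> T f y = e y * f (phi y)"
proof -
  obtain x where "\<forall>f\<in>A. (\<forall>z. 0 \<le> f z) \<and> T f y = 0 \<longrightarrow> f x = 0" using kernel_point by blast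
  then have "\<exists>x. \<forall>f\<in>A. T f y = e y * f x" using eval by blast
  then have "\<forall>f\<in>A. T f y = e y * f (phi y)" unfolding phi_def by (rule someI_ex)
  then show "f \<in> A \<Longrightarrow> T f y = e y * f (phi y)" by blast
qed

lemma phi_cont: "continuous_on UNIV phi"
proof -
  have "open (phi -` U)" if U: "open U" for U
  proof (subst open_subopen, intro ballI)
    fix y0 assume "y0 \<in> phi -` U"
    then have "phi y0 \<notin> - U" by simp
    moreover have "closed (- U)" using U by auto
    ultimately obtain f where f: "f \<in> A" "f (phi y0) = 1" "\<forall>z\<in>-U. f z = 0"
      using pA unfolding precisely_separates_points_closed_def by blast
    define V where "V = {y. 1/2 < T f y / e y}"
    have eB: "e \<in> B" using TB constA by (simp add: e_def)
    have "open V" unfolding V_def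
      using e_pos by (intro open_Collect_less continuous_intros contB TB f(1) eB) (simp add: less_le)
    moreover have "y0 \<in> V" using phi[OF f(1), of y0] f(2) e_pos[of y0] by (simp add: V_def)
    moreover have "V \<subseteq> phi -` U"
    proof
      fix y assume "y \<in> V"
      then have "1/2 < f (phi y)" using phi[OF f(1), of y] e_pos[of y] by (simp add: V_def)
      then show "y \<in> phi -` U" using f(3) by force
    qed
    ultimately show "\<exists>V. open V \<and> y0 \<in> V \<and> V \<subseteq> phi -` U" by blast
  qed
  then show ?thesis by (simp add: continuous_on_open_vimage)
qed

lemma phi_inj: "inj phi"
proof (rule injI, rule ccontr)
  fix y1 y2 assume eq: "phi y1 = phi y2" and ne: "y1 \<noteq> y2"
  have "closed {y2}" "y1 \<notin> {y2}" using ne by auto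
  then obtain k where k: "k \<in> B" "k y1 = 1" "k y2 = 0"
    using pB unfolding precisely_separates_points_closed_def by blast
  obtain \<kappa> where \<kappa>: "\<kappa> \<in> A" "T \<kappa> = k" using Tsurj k(1) by blast
  obtain d where d: "d \<in> A" "T d = (\<lambda>_. 1)" using Tsurj constB by blast
  have 1: "1 = e y1 * d (phi y1)" using phi[OF d(1), of y1] d(2) by simp
  have 2: "1 = e y2 * d (phi y1)" using phi[OF d(1), of y2] d(2) eq by simp
  have "d (phi y1) \<noteq> 0" using 1 by auto
  then have ee: "e y1 = e y2" using 1 2 by (metis mult_right_cancel)
  have "k y1 = e y1 * \<kappa> (phi y1)" "k y2 = e y2 * \<kappa> (phi y2)" using phi[OF \<kappa>(1)] \<kappa>(2) by auto
  then show False using k ee eq by simp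
qed

lemma phi_surj: "range phi = UNIV"
proof (rule ccontr)
  assume "range phi \<noteq> UNIV"
  then obtain x where x: "x \<notin> range phi" by blast
  have "closed (range phi)"
    by (rule compact_imp_closed, rule compact_continuous_image[OF phi_cont cY])
  then obtain f where f: "f \<in> A" "f x = 1" "\<forall>z\<in>range phi. f z = 0"
    using x pA unfolding precisely_separates_points_closed_def by blast
  have "T f = T (\<lambda>_. 0)" using phi[OF f(1)] f(3) T0 by auto
  then have "f = (\<lambda>_. 0)" using Tinj f(1) constA by blast
  then show False using f(2) by simp
qed

end

theorem theorem2p1:
  fixes A :: "('a::t2_space \<Rightarrow> real) set"
    and B :: "('b::t2_space \<Rightarrow> real) set"
    and T :: "('a \<Rightarrow> real) \<Rightarrow> ('b \<Rightarrow> real)"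
  assumes "compact (UNIV :: 'a set)" and "compact (UNIV :: 'b set)"
    and "fun_subspace_of_C A" and "contains_constants A" and "precisely_separates_points_closed A"
    and "fun_subspace_of_C B" and "contains_constants B" and "precisely_separates_points_closed B"
    and "order_isomorphism A B T"
  shows "\<exists>h g. homeomorphism UNIV UNIV h g \<and>
           (\<forall>f\<in>A. \<forall>y. T f y = T (\<lambda>_. 1) y * f (g y))"
proof -
  interpret OI A B T using assms by (unfold_locales)
  obtain h where "homeomorphism UNIV UNIV phi h"
    using homeomorphism_compact[OF cY phi_cont phi_surj phi_inj] by blast
  then have "homeomorphism UNIV UNIV h phi" by (rule homeomorphism_symD)
  moreover have "\<forall>f\<in>A. \<forall>y. T f y = T (\<lambda>_. 1) y * f (phi y)" using phi by (simp add: e_def)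
  ultimately show ?thesis by blast
qed

end
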